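(* Let $\mathcal{X},\mathcal{Y}$ be finite sets and $n\ge 1$. Let $\tilde{\Phi}_n=(\tilde{\varphi}_0,\tilde{\varphi}_2,\tilde{\psi})$ be a WAK code of blocklength $n$ with message sets $\tilde{\mathcal{M}}_0,\tilde{\mathcal{M}}_2$, and let $P_{\bar X\bar Y}\in\mathcal{P}_n(\mathcal{X}\times\mathcal{Y})$ be a joint type such that $$\log|\mathcal{T}^n_{\bar X}|\ge \log|\tilde{\mathcal{M}}_0|,$$ where $\mathcal{T}^n_{\bar X}$ is the type class of the marginal type $P_{\bar X}$. Then there exists a GW code $\Phi_n=(\varphi_0,\varphi_1,\varphi_2,\psi_1,\psi_2)$ of blocklength $n$ with message sets $\mathcal{M}_0,\mathcal{M}_1,\mathcal{M}_2$ such that \begin{align*} \log|\mathcal{M}_0| &\le \log|\tilde{\mathcal{M}}_0|+\log n+\log\log|\mathcal{X}|+2,\\ \log |\mathcal{M}_0||\mathcal{M}_1| &\le \log|\mathcal{T}^n_{\bar X}|+\log n+\log\log|\mathcal{X}|+2,\\ \log|\mathcal{M}_2| &= \log|\tilde{\mathcal{M}}_2|, \end{align*} and $$\mathrm{P}_{\mathtt{GW}}(\Phi_n\mid P_{\mathcal{T}^n_{\bar X\bar Y}})\le \mathrm{P}_{\mathtt{WAK}}(\tilde{\Phi}_n\mid P_{\mathcal{T}^n_{\bar X\bar Y}}).$$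
   Context: All logarithms are base 2. $\mathcal{P}_n(\mathcal{X}\times\mathcal{Y})$ is the set of joint types (empirical distributions) of sequences in $\mathcal{X}^n\times\mathcal{Y}^n$; for a joint type $P_{\bar X\bar Y}$, $\mathcal{T}^n_{\bar X\bar Y}$ is its type class (the set of pairs of sequences with that joint type) and $P_{\mathcal{T}^n_{\bar X\bar Y}}$ is the uniform distribution on $\mathcal{T}^n_{\bar X\bar Y}$. A WAK (Wyner–Ahlswede–Körner, source coding with a helper) code of blocklength $n$ is a triple $\tilde{\Phi}_n=(\tilde{\varphi}_0,\tilde{\varphi}_2,\tilde{\psi})$ of maps $\tilde{\varphi}_0:\mathcal{X}^n\to\tilde{\mathcal{M}}_0$, $\tilde{\varphi}_2:\mathcal{Y}^n\to\tilde{\mathcal{M}}_2$, $\tilde{\psi}:\tilde{\mathcal{M}}_0\times\tilde{\mathcal{M}}_2\to\mathcal{Y}^n$, with finite sets $\tilde{\mathcal{M}}_0,\tilde{\mathcal{M}}_2$. For $(X^n,Y^n)\sim P$, $\mathrm{P}_{\mathtt{WAK}}(\tilde{\Phi}_n\mid P)$ is the probability that $\tilde{\psi}(\tilde{\varphi}_0(X^n),\tilde{\varphi}_2(Y^n))\ne Y^n$. A GW (Gray–Wyner) code of blocklength $n$ is a tuple $\Phi_n=(\varphi_0,\varphi_1,\varphi_2,\psi_1,\psi_2)$ of maps $\varphi_i:\mathcal{X}^n\times\mathcal{Y}^n\to\mathcal{M}_i$ ($i=0,1,2$, finite sets $\mathcal{M}_i$), $\psi_1:\mathcal{M}_0\times\mathcal{M}_1\to\mathcal{X}^n$,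 $\psi_2:\mathcal{M}_0\times\mathcal{M}_2\to\mathcal{Y}^n$. For $(X^n,Y^n)\sim P$, $\mathrm{P}_{\mathtt{GW}}(\Phi_n\mid P)$ is the probability that $\big(\psi_1(\varphi_0(X^n,Y^n),\varphi_1(X^n,Y^n)),\psi_2(\varphi_0(X^n,Y^n),\varphi_2(X^n,Y^n))\big)\ne (X^n,Y^n)$. *)

theory Defs
  imports "HOL-Probability.Probability_Mass_Function"
begin

definition seq_type :: "'a list \<Rightarrow> ('a \<Rightarrow> real)" where
  "seq_type xs = (\<lambda>a. real (card {i. i < length xs \<and> xs ! i = a}) / real (length xs))"

definition joint_type :: "'a list \<Rightarrow> 'b list \<Rightarrow> ('a \<times> 'b \<Rightarrow> real)" where
  "joint_type xs ys = (\<lambda>ab. real (card {i. i < length xs \<and> (xs ! i, ys ! i) = ab}) / real (length xs))"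

definition joint_types :: "nat \<Rightarrow> ('a \<times> 'b \<Rightarrow> real) set" where
  "joint_types n = {joint_type xs ys | xs ys. length xs = n \<and> length ys = n}"

definition joint_type_class :: "nat \<Rightarrow> ('a \<times> 'b \<Rightarrow> real) \<Rightarrow> ('a list \<times> 'b list) set" where
  "joint_type_class n P = {(xs, ys). length xs = n \<and> length ys = n \<and> joint_type xs ys = P}"

definition seq_type_class :: "nat \<Rightarrow> ('a \<Rightarrow> real) \<Rightarrow> 'a list set" where
  "seq_type_class n Q = {xs. length xs = n \<and> seq_type xs = Q}"

definition marginal_x :: "('a::finite \<times> 'b::finite \<Rightarrow> real) \<Rightarrow> ('a \<Rightarrow> real)" where
  "marginal_x P = (\<lambda>a. \<Sum>b\<in>UNIV. P (a, b))"

definition wak_code :: "nat \<Rightarrow> 'm0 set \<Rightarrow> 'm2 set \<Rightarrow> ('a list \<Rightarrow> 'm0) \<Rightarrow> ('b list \<Rightarrow> 'm2)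
    \<Rightarrow> ('m0 \<Rightarrow> 'm2 \<Rightarrow> 'b list) \<Rightarrow> bool" where
  "wak_code n M0 M2 f0 f2 g \<longleftrightarrow> finite M0 \<and> finite M2 \<and>
     (\<forall>xs. length xs = n \<longrightarrow> f0 xs \<in> M0) \<and>
     (\<forall>ys. length ys = n \<longrightarrow> f2 ys \<in> M2) \<and>
     (\<forall>m0\<in>M0. \<forall>m2\<in>M2. length (g m0 m2) = n)"

definition wak_error :: "('a list \<Rightarrow> 'm0) \<Rightarrow> ('b list \<Rightarrow> 'm2) \<Rightarrow> ('m0 \<Rightarrow> 'm2 \<Rightarrow> 'b list)
    \<Rightarrow> ('a list \<times> 'b list) pmf \<Rightarrow> real" where
  "wak_error f0 f2 g p = measure_pmf.prob p {(xs, ys). g (f0 xs) (f2 ys) \<noteq> ys}"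

definition gw_code :: "nat \<Rightarrow> 'm0 set \<Rightarrow> 'm1 set \<Rightarrow> 'm2 set
    \<Rightarrow> ('a list \<Rightarrow> 'b list \<Rightarrow> 'm0) \<Rightarrow> ('a list \<Rightarrow> 'b list \<Rightarrow> 'm1) \<Rightarrow> ('a list \<Rightarrow> 'b list \<Rightarrow> 'm2)
    \<Rightarrow> ('m0 \<Rightarrow> 'm1 \<Rightarrow> 'a list) \<Rightarrow> ('m0 \<Rightarrow> 'm2 \<Rightarrow> 'b list) \<Rightarrow> bool" where
  "gw_code n M0 M1 M2 f0 f1 f2 g1 g2 \<longleftrightarrow> finite M0 \<and> finite M1 \<and> finite M2 \<and>
     (\<forall>xs ys. length xs = n \<and> length ys = n \<longrightarrow>
        f0 xs ys \<in> M0 \<and> f1 xs ys \<in> M1 \<and> f2 xs ys \<in> M2) \<and>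
     (\<forall>m0\<in>M0. \<forall>m1\<in>M1. length (g1 m0 m1) = n) \<and>
     (\<forall>m0\<in>M0. \<forall>m2\<in>M2. length (g2 m0 m2) = n)"

definition gw_error :: "('a list \<Rightarrow> 'b list \<Rightarrow> 'm0) \<Rightarrow> ('a list \<Rightarrow> 'b list \<Rightarrow> 'm1) \<Rightarrow> ('a list \<Rightarrow> 'b list \<Rightarrow> 'm2)
    \<Rightarrow> ('m0 \<Rightarrow> 'm1 \<Rightarrow> 'a list) \<Rightarrow> ('m0 \<Rightarrow> 'm2 \<Rightarrow> 'b list) \<Rightarrow> ('a list \<times> 'b list) pmf \<Rightarrow> real" where
  "gw_error f0 f1 f2 g1 g2 p = measure_pmf.prob p
     {(xs, ys). (g1 (f0 xs ys) (f1 xs ys), g2 (f0 xs ys) (f2 xs ys)) \<noteq> (xs, ys)}"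

end

theory Submission
  imports Defs
begin

lemma marginal_joint:
  fixes xs :: "'x::finite list" and ys :: "'y::finite list"
  shows "marginal_x (joint_type xs ys) = seq_type xs"
proof
  fix a
  define B where "B = (\<lambda>b. {i. i < length xs \<and> (xs ! i, ys ! i) = (a, b)})"
  have e: "{i. i < length xs \<and> xs ! i = a} = (\<Union>b\<in>UNIV. B b)"
    unfolding B_def by auto
  have "card (\<Union>b\<in>UNIV. B b) = (\<Sum>b\<in>UNIV. card (B b))"
    by (rule card_UN_disjoint) (auto simp: B_def)
  hence "card {i. i < length xs \<and> xs ! i = a} = (\<Sum>b\<in>UNIV. card {i. i < length xs \<and> (xs ! i, ys ! i) = (a, b)})"
    using e by (simp add: B_def)
  hence "real (card {i. i < length xs \<and> xs ! i = a}) = (\<Sum>b\<in>UNIV. real (card {i. i < length xs \<and> (xs ! i, ys ! i) = (a, b)}))"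
    by (simp only: of_nat_sum)
  thus "marginal_x (joint_type xs ys) a = seq_type xs a"
    unfolding marginal_x_def joint_type_def seq_type_def
    by (simp only: sum_divide_distrib)
qed

lemma div_ceil_less:
  fixes i a K :: nat
  assumes "i < a" "K \<ge> 1"
  shows "i div K < (a + K - 1) div K"
proof -
  have "i div K * K \<le> i" by simp
  moreover have "(i div K + 1) * K = i div K * K + K" by simp
  ultimately have "(i div K + 1) * K \<le> a + K - 1" using assms by linarith
  hence "i div K + 1 \<le> (a + K - 1) div K"
    by (metis assms(2) div_le_mono le_add2 less_le_trans less_numeral_extra(1) nonzero_mult_div_cancel_right not_one_le_zero)
  thus ?thesis by simp
qed

lemma ceil_sum_bound:
  fixes a :: "'m \<Rightarrow> nat" and K t :: nat
  assumes "finite M" "K \<ge> 1" "(\<Sum>m\<in>M. a m) \<le> t" "t \<le> card M * K"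
  shows "(\<Sum>m\<in>M. (a m + K - 1) div K) \<le> 2 * card M"
proof -
  have "K * (\<Sum>m\<in>M. (a m + K - 1) div K) = (\<Sum>m\<in>M. K * ((a m + K - 1) div K))"
    by (simp add: sum_distrib_left)
  also have "\<dots> \<le> (\<Sum>m\<in>M. a m + K)"
  proof (rule sum_mono)
    fix m assume "m \<in> M"
    have "K * ((a m + K - 1) div K) \<le> a m + K - 1" by simp
    thus "K * ((a m + K - 1) div K) \<le> a m + K" by linarith
  qed
  also have "\<dots> = (\<Sum>m\<in>M. a m) + card M * K" by (simp add: sum.distrib)
  also have "\<dots> \<le> K * (2 * card M)" using assms by (simp add: mult.commute)
  finally show ?thesis using assms(2) by simp
qed

theorem theorem1:
  fixes n :: nat
    and M0 :: "'m0 set" and M2 :: "'m2 set"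
    and f0 :: "'x::finite list \<Rightarrow> 'm0" and f2 :: "'y::finite list \<Rightarrow> 'm2"
    and g :: "'m0 \<Rightarrow> 'm2 \<Rightarrow> 'y list"
    and P :: "'x \<times> 'y \<Rightarrow> real"
  assumes "n \<ge> 1"
    and "wak_code n M0 M2 f0 f2 g"
    and "P \<in> joint_types n"
    and "log 2 (card (seq_type_class n (marginal_x P))) \<ge> log 2 (card M0)"
  shows "\<exists>(N0 :: nat set) (N1 :: nat set) (N2 :: nat set) h0 h1 h2 d1 d2.
     gw_code n N0 N1 N2 h0 h1 h2 d1 d2 \<and>
     log 2 (card N0) \<le> log 2 (card M0) + log 2 n + log 2 (log 2 (card (UNIV :: 'x set))) + 2 \<and>
     log 2 (card N0 * card N1) \<le> log 2 (card (seq_type_class n (marginal_x P))) + log 2 n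
        + log 2 (log 2 (card (UNIV :: 'x set))) + 2 \<and>
     log 2 (card N2) = log 2 (card M2) \<and>
     gw_error h0 h1 h2 d1 d2 (pmf_of_set (joint_type_class n P))
       \<le> wak_error f0 f2 g (pmf_of_set (joint_type_class n P))"
proof -
  from assms(3) obtain xs0 ys0 where l0: "length xs0 = n" "length ys0 = n" and P: "P = joint_type xs0 ys0"
    unfolding joint_types_def by blast
  define T where "T = seq_type_class n (marginal_x P)"
  define C where "C = joint_type_class n P"
  have inT: "xs \<in> T" if "(xs, ys) \<in> C" for xs ys
    using that marginal_joint[of xs ys] unfolding T_def C_def joint_type_class_def seq_type_class_def by auto
  have C0: "(xs0, ys0) \<in> C" using l0 P unfolding C_def joint_type_class_def by auto
  have Tlen: "length xs = n" if "xs \<in> T" for xs using that unfolding T_def seq_type_class_def by auto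
  have finT: "finite T"
  proof -
    have "T \<subseteq> {xs. set xs \<subseteq> UNIV \<and> length xs = n}" using Tlen by auto
    thus ?thesis using finite_lists_length_eq[of "UNIV::'x set" n] finite_subset by auto
  qed
  have finC: "finite C"
  proof -
    have "C \<subseteq> {xs. set xs \<subseteq> (UNIV::'x set) \<and> length xs = n} \<times> {ys. set ys \<subseteq> (UNIV::'y set) \<and> length ys = n}"
      unfolding C_def joint_type_class_def by auto
    thus ?thesis by (rule finite_subset)
      (intro finite_cartesian_product finite_lists_length_eq; simp)
  qed
  have xs0T: "xs0 \<in> T" using inT C0 by blast
  have finM0: "finite M0" and finM2: "finite M2" and f0M: "\<And>xs. length xs = n \<Longrightarrow> f0 xs \<in> M0"
    and f2M: "\<And>ys. length ys = n \<Longrightarrow> f2 ys \<in> M2"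
    and glen: "\<And>m0 m2. m0 \<in> M0 \<Longrightarrow> m2 \<in> M2 \<Longrightarrow> length (g m0 m2) = n"
    using assms(2) unfolding wak_code_def by auto
  define q where "q = card M0"
  define t where "t = card T"
  have q1: "q \<ge> 1" using f0M[OF l0(1)] finM0 unfolding q_def
    by (metis One_nat_def Suc_leI card_gt_0_iff empty_iff)
  have t1: "t \<ge> 1" using xs0T finT unfolding t_def
    by (metis One_nat_def Suc_leI card_gt_0_iff empty_iff)
  have qt: "q \<le> t"
  proof -
    have "log 2 (real q) \<le> log 2 (real t)" using assms(4) unfolding q_def t_def T_def by simp
    hence "real q \<le> real t" using q1 t1 by (subst (asm) log_le_cancel_iff) auto
    thus ?thesis by simp
  qed
  define K where "K = (t + q - 1) div q"
  have K1: "K \<ge> 1"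
  proof -
    have "q \<le> t + q - 1" using t1 by simp
    hence "q div q \<le> (t + q - 1) div q" by (rule div_le_mono)
    thus ?thesis using q1 unfolding K_def by simp
  qed
  have tqK: "t \<le> q * K"
  proof -
    have "t + q - 1 = q * K + (t + q - 1) mod q" unfolding K_def by simp
    moreover have "(t + q - 1) mod q < q" using q1 by simp
    ultimately show ?thesis by linarith
  qed
  have qK: "q * K \<le> 2 * t"
  proof -
    have "q * K \<le> t + q - 1" unfolding K_def by simp
    thus ?thesis using qt by linarith
  qed
  define A where "A = (\<lambda>m. {xs \<in> T. f0 xs = m})"
  have finA: "finite (A m)" for m unfolding A_def using finT by simp
  have "\<forall>m. \<exists>h. bij_betw h (A m) {0..<card (A m)}" using ex_bij_betw_finite_nat finA by blast
  then obtain ix where ix: "\<And>m. bij_betw (ix m) (A m) {0..<card (A m)}" by metis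
  define c where "c = (\<lambda>m. (card (A m) + K - 1) div K)"
  define S where "S = Sigma M0 (\<lambda>m. {..<c m})"
  have finS: "finite S" unfolding S_def using finM0 by simp
  have UA: "T = (\<Union>m\<in>M0. A m)" unfolding A_def using f0M Tlen by auto
  have sumA: "(\<Sum>m\<in>M0. card (A m)) = t"
    unfolding t_def UA by (rule card_UN_disjoint[symmetric]) (auto simp: finM0 finT A_def)
  have cardS: "card S = (\<Sum>m\<in>M0. c m)" unfolding S_def using finM0 by (simp add: card_SigmaI)
  have cardS2: "card S \<le> 2 * q"
    using ceil_sum_bound[where M=M0 and K=K and t=t and a="\<lambda>m. card (A m)"] finM0 K1 sumA tqK
    unfolding cardS c_def q_def by simp
  have key: "(f0 xs, ix (f0 xs) xs div K) \<in> S" and keyi: "ix (f0 xs) xs < card (A (f0 xs))"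
    and keyA: "xs \<in> A (f0 xs)" if "xs \<in> T" for xs
  proof -
    show xA: "xs \<in> A (f0 xs)" using that unfolding A_def by simp
    show i: "ix (f0 xs) xs < card (A (f0 xs))" using bij_betw_apply[OF ix xA] by simp
    show "(f0 xs, ix (f0 xs) xs div K) \<in> S" unfolding S_def c_def
      using f0M[OF Tlen[OF that]] div_ceil_less[OF i K1] by simp
  qed
  have S1: "card S \<ge> 1" using key[OF xs0T] finS
    by (metis One_nat_def Suc_leI card_gt_0_iff empty_iff)
  obtain e0 where e0: "bij_betw e0 S {0..<card S}" using ex_bij_betw_finite_nat finS by blast
  obtain e2 where e2: "bij_betw e2 M2 {0..<card M2}" using ex_bij_betw_finite_nat finM2 by blast
  define N0 where "N0 = {0..<card S}"
  define N1 where "N1 = {0..<K}"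
  define N2 where "N2 = {0..<card M2}"
  define h0 where "h0 = (\<lambda>(xs::'x list) (ys::'y list). if xs \<in> T then e0 (f0 xs, ix (f0 xs) xs div K) else 0)"
  define h1 where "h1 = (\<lambda>(xs::'x list) (ys::'y list). if xs \<in> T then ix (f0 xs) xs mod K else (0::nat))"
  define h2 where "h2 = (\<lambda>(xs::'x list) (ys::'y list). e2 (f2 ys))"
  define d1 where "d1 = (\<lambda>k j. let m = fst (inv_into S e0 k); i = snd (inv_into S e0 k) * K + j in
       if i < card (A m) then inv_into (A m) (ix m) i else xs0)"
  define d2 where "d2 = (\<lambda>k l. g (fst (inv_into S e0 k)) (inv_into M2 e2 l))"
  have code: "gw_code n N0 N1 N2 h0 h1 h2 d1 d2"
    unfolding gw_code_def
  proof (intro conjI allI impI ballI)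
    show "finite N0" "finite N1" "finite N2" unfolding N0_def N1_def N2_def by auto
  next
    fix xs :: "'x list" and ys :: "'y list" assume l: "length xs = n \<and> length ys = n"
    show "h0 xs ys \<in> N0" unfolding h0_def N0_def using bij_betw_apply[OF e0 key] S1 by auto
    show "h1 xs ys \<in> N1" unfolding h1_def N1_def using K1 by auto
    show "h2 xs ys \<in> N2" unfolding h2_def N2_def using bij_betw_apply[OF e2 f2M] l by auto
  next
    fix k j assume k: "k \<in> N0" and j: "j \<in> N1"
    have "inv_into S e0 k \<in> S" using bij_betw_apply[OF bij_betw_inv_into[OF e0]] k unfolding N0_def by auto
    show "length (d1 k j) = n"
    proof (cases "snd (inv_into S e0 k) * K + j < card (A (fst (inv_into S e0 k)))")
      case True
      let ?m = "fst (inv_into S e0 k)"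
      have "inv_into (A ?m) (ix ?m) (snd (inv_into S e0 k) * K + j) \<in> A ?m"
        using bij_betw_apply[OF bij_betw_inv_into[OF ix] ] True by auto
      hence "length (inv_into (A ?m) (ix ?m) (snd (inv_into S e0 k) * K + j)) = n"
        using Tlen unfolding A_def by auto
      thus ?thesis using True unfolding d1_def Let_def by simp
    next
      case False
      thus ?thesis using l0 unfolding d1_def Let_def by simp
    qed
  next
    fix k l assume k: "k \<in> N0" and l: "l \<in> N2"
    have "inv_into S e0 k \<in> S" using bij_betw_apply[OF bij_betw_inv_into[OF e0]] k unfolding N0_def by auto
    moreover have "inv_into M2 e2 l \<in> M2" using bij_betw_apply[OF bij_betw_inv_into[OF e2]] l unfolding N2_def by auto
    ultimately show "length (d2 k l) = n" unfolding d2_def S_def using glen by auto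
  qed
  have corr: "d1 (h0 xs ys) (h1 xs ys) = xs \<and> d2 (h0 xs ys) (h2 xs ys) = g (f0 xs) (f2 ys)"
    if xy: "(xs, ys) \<in> C" for xs ys
  proof -
    have xT: "xs \<in> T" using inT xy by blast
    have ly: "length ys = n" using xy unfolding C_def joint_type_class_def by auto
    let ?m = "f0 xs" let ?i = "ix (f0 xs) xs"
    have inv0: "inv_into S e0 (e0 (?m, ?i div K)) = (?m, ?i div K)"
      using inv_into_f_f[OF bij_betw_imp_inj_on[OF e0] key[OF xT]] .
    have eqi: "?i div K * K + ?i mod K = ?i" by simp
    have inv1: "inv_into (A ?m) (ix ?m) ?i = xs"
      using inv_into_f_f[OF bij_betw_imp_inj_on[OF ix] keyA[OF xT]] .
    have inv2: "inv_into M2 e2 (e2 (f2 ys)) = f2 ys"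
      using inv_into_f_f[OF bij_betw_imp_inj_on[OF e2] f2M[OF ly]] .
    show ?thesis unfolding d1_def d2_def h0_def h1_def h2_def Let_def
      using xT inv0 eqi inv1 inv2 keyi[OF xT] by simp
  qed
  have err: "gw_error h0 h1 h2 d1 d2 (pmf_of_set C) \<le> wak_error f0 f2 g (pmf_of_set C)"
  proof -
    let ?p = "pmf_of_set C"
    let ?G = "{(xs, ys). (d1 (h0 xs ys) (h1 xs ys), d2 (h0 xs ys) (h2 xs ys)) \<noteq> (xs, ys)}"
    let ?W = "{(xs, ys). g (f0 xs) (f2 ys) \<noteq> ys}"
    have "C \<noteq> {}" using C0 by blast
    hence sp: "set_pmf ?p = C" using finC by (simp add: set_pmf_of_set)
    have sub: "?G \<inter> C \<subseteq> ?W" using corr by auto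
    have "measure_pmf.prob ?p ?G = measure_pmf.prob ?p (?G \<inter> set_pmf ?p)"
      by (rule measure_Int_set_pmf[symmetric])
    also have "\<dots> \<le> measure_pmf.prob ?p ?W"
      using sub sp by (intro measure_pmf.finite_measure_mono) auto
    finally show ?thesis unfolding gw_error_def wak_error_def .
  qed
  have ll: "0 \<le> log 2 (log 2 (real (card (UNIV :: 'x set))))"
  proof (cases "card (UNIV :: 'x set) = 1")
    case True thus ?thesis by (simp add: log_def)
  next
    case False
    hence "card (UNIV :: 'x set) \<ge> 2"
    proof -
      have "CARD('x) > 0" by (rule finite_UNIV_card_ge_0) simp
      thus ?thesis using False by linarith
    qed
    hence "log 2 (real (card (UNIV :: 'x set))) \<ge> 1" by simp
    thus ?thesis by simp
  qed
  have ln: "0 \<le> log 2 (real n)" using assms(1) by simp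
  have b1: "log 2 (real (card N0)) \<le> log 2 (real (card M0)) + log 2 (real n) + log 2 (log 2 (real (card (UNIV :: 'x set)))) + 2"
  proof -
    have "log 2 (real (card S)) \<le> log 2 (2 * real q)" using cardS2 S1 by simp
    also have "\<dots> = 1 + log 2 (real q)" using q1 by (simp add: log_mult)
    finally show ?thesis unfolding N0_def q_def using ll ln by simp
  qed
  have b2: "log 2 (real (card N0 * card N1)) \<le> log 2 (real (card T)) + log 2 (real n) + log 2 (log 2 (real (card (UNIV :: 'x set)))) + 2"
  proof -
    have "card S * K \<le> 4 * t"
    proof -
      have "card S * K \<le> 2 * q * K" using cardS2 by simp
      thus ?thesis using qK by linarith
    qed
    hence "real (card S * K) \<le> 4 * real t" by linarith
    moreover have "real (card S * K) > 0" using S1 K1 by simp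
    ultimately have "log 2 (real (card S * K)) \<le> log 2 (4 * real t)" by simp
    also have "\<dots> = 2 + log 2 (real t)"
    proof -
      have "log 2 (4::real) = log 2 (2 powr 2)" by simp
      also have "\<dots> = 2" by (subst log_powr_cancel) auto
      finally show ?thesis using t1 by (simp add: log_mult)
    qed
    finally show ?thesis unfolding N0_def N1_def t_def using ll ln by simp
  qed
  have b3: "log 2 (real (card N2)) = log 2 (real (card M2))" unfolding N2_def by simp
  show ?thesis
    using code b1 b2 b3 err unfolding T_def C_def by blast
qed

end
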